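(* Let $R$ be a pmp equivalence relation on $(X,\mu)$ and $F\subseteq\llbracket R\rrbracket$ a finite subset. Then $s(F)\leq\operatorname{cost}(F)$, where $\operatorname{cost}(F)=\sum_{s\in F}\mu(\operatorname{dom}s)$.
   Context: Let $(X,\mu)$ be a standard probability space and $R$ a pmp countable Borel equivalence relation. $\llbracket R\rrbracket$ denotes the set of partial measure-preserving Borel bijections between Borel subsets of $X$ with graph contained in $R$, modulo null sets, with composition, inverses and identity $1$. Pairwise orthogonal elements (pairwise disjoint domains and ranges) have a sum; $\mathbf\Sigma F$ is the set of finite sums of pairwise orthogonal elements of $F$; $F_\pm=F\cup\{s^{-1}:s\in F\}\cup\{1\}$; $F_\pm^n$ the products of $n$ elements of $F_\pm$. $|s-t|=\mu\{x\in\operatorname{dom}s\cup\operatorname{dom}t:s(x)\neq t(x)\}$ (with $s(x)\neq t(x)$ on $\operatorname{dom}s\triangle\operatorname{dom}t$), $\tau(s)=\mu\{x\in\operatorname{dom}s:s(x)=x\}$. $\llbracket d\rrbracket$: partial permutations of $\{1,\dots,d\}$ with uniform measure, same distance, trace $\operatorname{tr}$. ${\rm SA}(F,n,\delta,d)$ is the set of maps $\varphi:\llbracket R\rrbracket\to\llbracket d\rrbracket$ with $\varphi(1)=1$ such that $|\varphi(st)-\varphi(s)\varphi(t)|<\delta$ for all $s,t\in\mathbf\Sigma F_\pm^n$ with $st\in\mathbf\Sigma F_\pm^n$, and $|\operatorname{tr}(\varphi(s))-\tau(s)|<\delta$ for all $s\in\mathbf\Sigma F_\pm^n$. ${\rm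 NSA}(F,n,\delta,d)$ is the number of distinct restrictions $\varphi|_F$, $\varphi\in{\rm SA}(F,n,\delta,d)$, and $s(F)=\inf_n\inf_{\delta>0}\limsup_{d\to\infty}\frac{1}{d\log d}\log{\rm NSA}(F,n,\delta,d)$ ($\log0=-\infty$). *)

theory Defs
  imports "HOL-Probability.Probability"
begin

definition borel_pbij :: "'a measure \<Rightarrow> ('a \<times> 'a) set \<Rightarrow> ('a \<rightharpoonup> 'a) \<Rightarrow> bool" where
  "borel_pbij M R f \<longleftrightarrow> dom f \<in> sets M \<and> inj_on f (dom f)
     \<and> (\<forall>x\<in>dom f. (x, the (f x)) \<in> R)
     \<and> (\<forall>A\<in>sets M. {x\<in>dom f. the (f x) \<in> A} \<in> sets M)
     \<and> (\<forall>A\<in>sets M. A \<subseteq> dom f \<longrightarrow> (\<lambda>x. the (f x)) ` A \<in> sets M)"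

definition meas_pres :: "'a measure \<Rightarrow> ('a \<rightharpoonup> 'a) \<Rightarrow> bool" where
  "meas_pres M f \<longleftrightarrow> (\<forall>A\<in>sets M. A \<subseteq> dom f \<longrightarrow>
      emeasure M ((\<lambda>x. the (f x)) ` A) = emeasure M A)"

definition cber :: "'a measure \<Rightarrow> ('a \<times> 'a) set \<Rightarrow> bool" where
  "cber M R \<longleftrightarrow> equiv (space M) R \<and> R \<in> sets (M \<Otimes>\<^sub>M M)
     \<and> (\<forall>x\<in>space M. countable (R `` {x}))"

definition pmp_rel :: "'a measure \<Rightarrow> ('a \<times> 'a) set \<Rightarrow> bool" where
  "pmp_rel M R \<longleftrightarrow> (\<forall>f. borel_pbij M R f \<longrightarrow> meas_pres M f)"

section \<open>The full pseudogroup [[R]] (classes modulo null sets)\<close>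

definition pmp_partial :: "'a measure \<Rightarrow> ('a \<times> 'a) set \<Rightarrow> ('a \<rightharpoonup> 'a) \<Rightarrow> bool" where
  "pmp_partial M R f \<longleftrightarrow> borel_pbij M R f \<and> meas_pres M f"

text \<open>Class modulo null sets (f x \<noteq> g x includes the symmetric difference of domains).\<close>
definition pg_class :: "'a measure \<Rightarrow> ('a \<times> 'a) set \<Rightarrow> ('a \<rightharpoonup> 'a) \<Rightarrow> ('a \<rightharpoonup> 'a) set" where
  "pg_class M R f = {g. pmp_partial M R g \<and> (AE x in M. g x = f x)}"

definition pseudogroup :: "'a measure \<Rightarrow> ('a \<times> 'a) set \<Rightarrow> ('a \<rightharpoonup> 'a) set set" where
  "pseudogroup M R = pg_class M R ` {f. pmp_partial M R f}"

definition pg_rep :: "('a \<rightharpoonup> 'a) set \<Rightarrow> ('a \<rightharpoonup> 'a)" where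
  "pg_rep S = (SOME f. f \<in> S)"

definition pg_mult :: "'a measure \<Rightarrow> ('a \<times> 'a) set \<Rightarrow> ('a \<rightharpoonup> 'a) set \<Rightarrow> ('a \<rightharpoonup> 'a) set \<Rightarrow> ('a \<rightharpoonup> 'a) set" where
  "pg_mult M R S T = pg_class M R (pg_rep S \<circ>\<^sub>m pg_rep T)"

definition pinv :: "('a \<rightharpoonup> 'b) \<Rightarrow> ('b \<rightharpoonup> 'a)" where
  "pinv f = (\<lambda>y. if y \<in> ran f then Some (THE x. f x = Some y) else None)"

definition pg_inv :: "'a measure \<Rightarrow> ('a \<times> 'a) set \<Rightarrow> ('a \<rightharpoonup> 'a) set \<Rightarrow> ('a \<rightharpoonup> 'a) set" where
  "pg_inv M R S = pg_class M R (pinv (pg_rep S))"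

definition pg_one :: "'a measure \<Rightarrow> ('a \<times> 'a) set \<Rightarrow> ('a \<rightharpoonup> 'a) set" where
  "pg_one M R = pg_class M R Some"

definition pg_orth :: "'a measure \<Rightarrow> ('a \<rightharpoonup> 'a) set \<Rightarrow> ('a \<rightharpoonup> 'a) set \<Rightarrow> bool" where
  "pg_orth M S T \<longleftrightarrow> dom (pg_rep S) \<inter> dom (pg_rep T) \<in> null_sets M
      \<and> ran (pg_rep S) \<inter> ran (pg_rep T) \<in> null_sets M"

definition pg_sum :: "'a measure \<Rightarrow> ('a \<times> 'a) set \<Rightarrow> ('a \<rightharpoonup> 'a) set set \<Rightarrow> ('a \<rightharpoonup> 'a) set" where
  "pg_sum M R G = pg_class M R (\<lambda>x. if \<exists>S\<in>G. x \<in> dom (pg_rep S)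
      then pg_rep (SOME S. S \<in> G \<and> x \<in> dom (pg_rep S)) x else None)"

definition SigmaSums :: "'a measure \<Rightarrow> ('a \<times> 'a) set \<Rightarrow> ('a \<rightharpoonup> 'a) set set \<Rightarrow> ('a \<rightharpoonup> 'a) set set" where
  "SigmaSums M R A = {pg_sum M R G | G. finite G \<and> G \<subseteq> A
      \<and> (\<forall>S\<in>G. \<forall>T\<in>G. S \<noteq> T \<longrightarrow> pg_orth M S T)}"

definition Fpm :: "'a measure \<Rightarrow> ('a \<times> 'a) set \<Rightarrow> ('a \<rightharpoonup> 'a) set set \<Rightarrow> ('a \<rightharpoonup> 'a) set set" where
  "Fpm M R F = F \<union> pg_inv M R ` F \<union> {pg_one M R}"

definition Fpow :: "'a measure \<Rightarrow> ('a \<times> 'a) set \<Rightarrow> ('a \<rightharpoonup> 'a) set set \<Rightarrow> nat \<Rightarrow> ('a \<rightharpoonup> 'a) set set" where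
  "Fpow M R F n = {foldr (pg_mult M R) xs (pg_one M R) | xs. length xs = n \<and> set xs \<subseteq> Fpm M R F}"

definition pg_dist :: "'a measure \<Rightarrow> ('a \<rightharpoonup> 'a) set \<Rightarrow> ('a \<rightharpoonup> 'a) set \<Rightarrow> real" where
  "pg_dist M S T = measure M {x. pg_rep S x \<noteq> pg_rep T x}"

definition pg_tau :: "'a measure \<Rightarrow> ('a \<rightharpoonup> 'a) set \<Rightarrow> real" where
  "pg_tau M S = measure M {x. pg_rep S x = Some x}"

definition pperm :: "nat \<Rightarrow> (nat \<rightharpoonup> nat) \<Rightarrow> bool" where
  "pperm d \<sigma> \<longleftrightarrow> dom \<sigma> \<subseteq> {1..d} \<and> ran \<sigma> \<subseteq> {1..d} \<and> inj_on \<sigma> (dom \<sigma>)"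

definition pp_one :: "nat \<Rightarrow> (nat \<rightharpoonup> nat)" where
  "pp_one d = (\<lambda>i. if i \<in> {1..d} then Some i else None)"

definition pp_dist :: "nat \<Rightarrow> (nat \<rightharpoonup> nat) \<Rightarrow> (nat \<rightharpoonup> nat) \<Rightarrow> real" where
  "pp_dist d \<sigma> \<tau> = real (card {i\<in>{1..d}. \<sigma> i \<noteq> \<tau> i}) / real d"

definition pp_tr :: "nat \<Rightarrow> (nat \<rightharpoonup> nat) \<Rightarrow> real" where
  "pp_tr d \<sigma> = real (card {i\<in>{1..d}. \<sigma> i = Some i}) / real d"

definition SA :: "'a measure \<Rightarrow> ('a \<times> 'a) set \<Rightarrow> ('a \<rightharpoonup> 'a) set set \<Rightarrow> nat \<Rightarrow> real \<Rightarrow> nat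
    \<Rightarrow> (('a \<rightharpoonup> 'a) set \<Rightarrow> (nat \<rightharpoonup> nat)) set" where
  "SA M R F n \<delta> d = (let Sg = SigmaSums M R (Fpow M R F n) in
     {\<phi>. (\<forall>S\<in>pseudogroup M R. pperm d (\<phi> S)) \<and> \<phi> (pg_one M R) = pp_one d
       \<and> (\<forall>s\<in>Sg. \<forall>t\<in>Sg. pg_mult M R s t \<in> Sg \<longrightarrow>
            pp_dist d (\<phi> (pg_mult M R s t)) (\<phi> s \<circ>\<^sub>m \<phi> t) < \<delta>)
       \<and> (\<forall>s\<in>Sg. \<bar>pp_tr d (\<phi> s) - pg_tau M s\<bar> < \<delta>)})"

definition NSA :: "'a measure \<Rightarrow> ('a \<times> 'a) set \<Rightarrow> ('a \<rightharpoonup> 'a) set set \<Rightarrow> nat \<Rightarrow> real \<Rightarrow> nat \<Rightarrow> nat" where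
  "NSA M R F n \<delta> d = card ((\<lambda>\<phi>. restrict \<phi> F) ` SA M R F n \<delta> d)"

text \<open>log 0 = -infinity; natural logarithms (base cancels in the ratio).\<close>
definition sofic_s :: "'a measure \<Rightarrow> ('a \<times> 'a) set \<Rightarrow> ('a \<rightharpoonup> 'a) set set \<Rightarrow> ereal" where
  "sofic_s M R F = (INF n\<in>{1..}. INF \<delta>\<in>{0<..}. limsup (\<lambda>d.
      if NSA M R F n \<delta> d = 0 then -\<infinity>
      else ereal (ln (real (NSA M R F n \<delta> d)) / (real d * ln (real d)))))"

definition pg_cost :: "'a measure \<Rightarrow> ('a \<rightharpoonup> 'a) set set \<Rightarrow> real" where
  "pg_cost M F = (\<Sum>S\<in>F. measure M (dom (pg_rep S)))"

end

theory Submission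
  imports Defs
begin



lemma dom_map_comp: "dom (f \<circ>\<^sub>m g) = {x\<in>dom g. the (g x) \<in> dom f}"
  by (auto simp: map_comp_def split: option.splits)

lemma the_map_comp: "x \<in> dom g \<Longrightarrow> the ((f \<circ>\<^sub>m g) x) = the (f (the (g x)))"
  by (auto simp: map_comp_def)

lemma Some_pbij:
  assumes "space M = UNIV" "refl R"
  shows "borel_pbij M R Some"
proof -
  have "UNIV \<in> sets M" using assms(1) sets.top by metis
  then show ?thesis using assms unfolding borel_pbij_def by (auto simp: refl_on_def)
qed

lemma comp_pbij:
  assumes f: "borel_pbij M R f" and g: "borel_pbij M R g" and "trans R"
  shows "borel_pbij M R (f \<circ>\<^sub>m g)"
proof -
  have pre: "\<And>A. A \<in> sets M \<Longrightarrow> {x\<in>dom (f \<circ>\<^sub>m g). the ((f \<circ>\<^sub>m g) x) \<in> A} \<in> sets M"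
  proof -
    fix A assume A: "A \<in> sets M"
    have B: "{y\<in>dom f. the (f y) \<in> A} \<in> sets M" using f A unfolding borel_pbij_def by blast
    have "{x\<in>dom (f \<circ>\<^sub>m g). the ((f \<circ>\<^sub>m g) x) \<in> A} = {x\<in>dom g. the (g x) \<in> {y\<in>dom f. the (f y) \<in> A}}"
      by (auto simp: map_comp_def split: option.splits)
    moreover have "{x\<in>dom g. the (g x) \<in> {y\<in>dom f. the (f y) \<in> A}} \<in> sets M"
      using g B unfolding borel_pbij_def by blast
    ultimately show "{x\<in>dom (f \<circ>\<^sub>m g). the ((f \<circ>\<^sub>m g) x) \<in> A} \<in> sets M"
      by argo
  qed
  have dm: "dom (f \<circ>\<^sub>m g) \<in> sets M"
  proof -
    have "dom (f \<circ>\<^sub>m g) = {x\<in>dom g. the (g x) \<in> dom f}" by (rule dom_map_comp)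
    then show ?thesis using f g unfolding borel_pbij_def by simp
  qed
  have inj: "inj_on (f \<circ>\<^sub>m g) (dom (f \<circ>\<^sub>m g))"
  proof (rule inj_onI)
    fix x y assume x: "x \<in> dom (f \<circ>\<^sub>m g)" and y: "y \<in> dom (f \<circ>\<^sub>m g)" and e: "(f \<circ>\<^sub>m g) x = (f \<circ>\<^sub>m g) y"
    have xx: "x \<in> dom g" "the (g x) \<in> dom f" using x by (auto simp: dom_map_comp)
    then obtain a where a: "g x = Some a" "a \<in> dom f" by fastforce
    have yy: "y \<in> dom g" "the (g y) \<in> dom f" using y by (auto simp: dom_map_comp)
    then obtain b where b: "g y = Some b" "b \<in> dom f" by fastforce
    have "f a = f b" using e a b by (simp add: map_comp_def)
    then have "a = b" using f a b unfolding borel_pbij_def by (meson inj_onD)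
    then have "g x = g y" using a b by simp
    then show "x = y" using g a b unfolding borel_pbij_def by (meson domI inj_onD)
  qed
  have gr: "\<forall>x\<in>dom (f \<circ>\<^sub>m g). (x, the ((f \<circ>\<^sub>m g) x)) \<in> R"
  proof
    fix x assume x: "x \<in> dom (f \<circ>\<^sub>m g)"
    have xx: "x \<in> dom g" "the (g x) \<in> dom f" using x by (auto simp: dom_map_comp)
    then obtain a where a: "g x = Some a" "a \<in> dom f" by fastforce
    have "(x, a) \<in> R" using g a unfolding borel_pbij_def by (metis domI option.sel)
    moreover have "(a, the (f a)) \<in> R" using f a unfolding borel_pbij_def by blast
    ultimately show "(x, the ((f \<circ>\<^sub>m g) x)) \<in> R" using assms(3) a by (auto simp: map_comp_def elim: transE)
  qed
  have im: "\<forall>A\<in>sets M. A \<subseteq> dom (f \<circ>\<^sub>m g) \<longrightarrow> (\<lambda>x. the ((f \<circ>\<^sub>m g) x)) ` A \<in> sets M"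
  proof (intro ballI impI)
    fix A assume A: "A \<in> sets M" "A \<subseteq> dom (f \<circ>\<^sub>m g)"
    have Ag: "A \<subseteq> dom g" using A(2) by (auto simp: dom_map_comp)
    have B: "(\<lambda>x. the (g x)) ` A \<in> sets M" using g A Ag unfolding borel_pbij_def by blast
    have Bf: "(\<lambda>x. the (g x)) ` A \<subseteq> dom f" using A(2) by (auto simp: dom_map_comp)
    have "(\<lambda>x. the ((f \<circ>\<^sub>m g) x)) ` A = (\<lambda>y. the (f y)) ` ((\<lambda>x. the (g x)) ` A)"
    proof -
      have "(\<lambda>x. the ((f \<circ>\<^sub>m g) x)) ` A = (\<lambda>x. the (f (the (g x)))) ` A"
        using Ag by (intro image_cong) (auto simp: the_map_comp)
      then show ?thesis by (simp add: image_image)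
    qed
    then show "(\<lambda>x. the ((f \<circ>\<^sub>m g) x)) ` A \<in> sets M" using f B Bf unfolding borel_pbij_def by simp
  qed
  have pre': "\<forall>A\<in>sets M. {x\<in>dom (f \<circ>\<^sub>m g). the ((f \<circ>\<^sub>m g) x) \<in> A} \<in> sets M"
    using pre by blast
  show ?thesis unfolding borel_pbij_def by (intro conjI dm inj gr pre' im)
qed

lemma pinv_Some:
  assumes inj: "inj_on f (dom f)"
  shows "(pinv f y = Some x) = (f x = Some y)"
proof -
  have uniq: "\<And>w z. f w = Some y \<Longrightarrow> f z = Some y \<Longrightarrow> w = z"
  proof -
    fix w z assume "f w = Some y" "f z = Some y"
    then show "w = z" using inj unfolding inj_on_def by (metis domI)
  qed
  show ?thesis
  proof
    assume h: "pinv f y = Some x"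
    then have y: "y \<in> ran f" unfolding pinv_def by (metis option.distinct(1))
    then have x: "x = (THE x. f x = Some y)" using h unfolding pinv_def by simp
    from y obtain z where z: "f z = Some y" unfolding ran_def by blast
    have "(THE x. f x = Some y) = z" using z uniq by blast
    then show "f x = Some y" using x z by simp
  next
    assume fx: "f x = Some y"
    then have y: "y \<in> ran f" unfolding ran_def by blast
    have "(THE x. f x = Some y) = x" using fx uniq by blast
    then show "pinv f y = Some x" using y unfolding pinv_def by simp
  qed
qed

lemma dom_pinv: "dom (pinv f) = ran f"
  by (rule set_eqI) (simp add: pinv_def dom_def)

lemma pinv_pbij:
  assumes f: "borel_pbij M R f" and "sym R"
  shows "borel_pbij M R (pinv f)"
proof -
  have inj: "inj_on f (dom f)" using f unfolding borel_pbij_def by blast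
  have ranim: "ran f = (\<lambda>x. the (f x)) ` dom f" by (force simp: ran_def dom_def image_iff)
  have dm: "dom (pinv f) \<in> sets M" using f unfolding dom_pinv ranim borel_pbij_def by blast
  have ps: "\<And>y. y \<in> dom (pinv f) \<Longrightarrow> f (the (pinv f y)) = Some y"
  proof -
    fix y assume "y \<in> dom (pinv f)"
    then obtain x where h: "pinv f y = Some x" by auto
    have 1: "the (pinv f y) = x" using h by simp
    have 2: "f x = Some y" using h pinv_Some[OF inj] by blast
    show "f (the (pinv f y)) = Some y" using 1 2 by simp
  qed
  have inj2: "inj_on (pinv f) (dom (pinv f))"
    by (rule inj_onI) (metis ps option.sel domIff option.collapse)
  have gr: "\<forall>y\<in>dom (pinv f). (y, the (pinv f y)) \<in> R"
  proof
    fix y assume y: "y \<in> dom (pinv f)"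
    have "(the (pinv f y), y) \<in> R" using f ps[OF y] unfolding borel_pbij_def by (metis domI option.sel)
    then show "(y, the (pinv f y)) \<in> R" using assms(2) by (auto elim: symE)
  qed
  have pre: "\<forall>A\<in>sets M. {y\<in>dom (pinv f). the (pinv f y) \<in> A} \<in> sets M"
  proof
    fix A assume A: "A \<in> sets M"
    have "{y\<in>dom (pinv f). the (pinv f y) \<in> A} = (\<lambda>x. the (f x)) ` (A \<inter> dom f)"
    proof (intro set_eqI iffI)
      fix y assume "y \<in> {y\<in>dom (pinv f). the (pinv f y) \<in> A}"
      then obtain x where x: "pinv f y = Some x" "x \<in> A" by auto
      then have "f x = Some y" using pinv_Some[OF inj] by simp
      then show "y \<in> (\<lambda>x. the (f x)) ` (A \<inter> dom f)" using x by (intro image_eqI[of _ _ x]) auto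
    next
      fix y assume "y \<in> (\<lambda>x. the (f x)) ` (A \<inter> dom f)"
      then obtain x where x: "x \<in> A" "x \<in> dom f" "y = the (f x)" by auto
      then have "f x = Some y" by auto
      then have "pinv f y = Some x" using pinv_Some[OF inj] by simp
      then show "y \<in> {y\<in>dom (pinv f). the (pinv f y) \<in> A}" using x by auto
    qed
    moreover have "A \<inter> dom f \<in> sets M" using A f unfolding borel_pbij_def by blast
    then have "(\<lambda>x. the (f x)) ` (A \<inter> dom f) \<in> sets M" using f unfolding borel_pbij_def by (meson Int_lower2)
    moreover note this
    ultimately show "{y\<in>dom (pinv f). the (pinv f y) \<in> A} \<in> sets M" by argo
  qed
  have im: "\<forall>A\<in>sets M. A \<subseteq> dom (pinv f) \<longrightarrow> (\<lambda>y. the (pinv f y)) ` A \<in> sets M"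
  proof (intro ballI impI)
    fix A assume A: "A \<in> sets M" "A \<subseteq> dom (pinv f)"
    have "(\<lambda>y. the (pinv f y)) ` A = {x\<in>dom f. the (f x) \<in> A}"
    proof (intro set_eqI iffI)
      fix x assume "x \<in> (\<lambda>y. the (pinv f y)) ` A"
      then obtain y where y: "y \<in> A" "x = the (pinv f y)" by auto
      then have "y \<in> dom (pinv f)" using A(2) by auto
      then have "pinv f y = Some x" using y by auto
      then have "f x = Some y" using pinv_Some[OF inj] by simp
      then show "x \<in> {x\<in>dom f. the (f x) \<in> A}" using y by auto
    next
      fix x assume "x \<in> {x\<in>dom f. the (f x) \<in> A}"
      then obtain y where y: "f x = Some y" "y \<in> A" by auto
      then have "pinv f y = Some x" using pinv_Some[OF inj] by simp
      then show "x \<in> (\<lambda>y. the (pinv f y)) ` A" using y by (intro image_eqI[of _ _ y]) auto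
    qed
    moreover have "{x\<in>dom f. the (f x) \<in> A} \<in> sets M" using A f unfolding borel_pbij_def by blast
    ultimately show "(\<lambda>y. the (pinv f y)) ` A \<in> sets M" by argo
  qed
  show ?thesis unfolding borel_pbij_def by (intro conjI dm inj2 gr pre im)
qed




lemma pbij_pmp: "pmp_rel M R \<Longrightarrow> borel_pbij M R f \<Longrightarrow> pmp_partial M R f"
  unfolding pmp_rel_def pmp_partial_def by blast

lemma rep_in_class: "pmp_partial M R f \<Longrightarrow> pg_rep (pg_class M R f) \<in> pg_class M R f"
  unfolding pg_rep_def by (rule someI[of _ f]) (simp add: pg_class_def)

lemma rep_pmp: "pmp_partial M R f \<Longrightarrow> pmp_partial M R (pg_rep (pg_class M R f))"
  using rep_in_class unfolding pg_class_def by blast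

lemma rep_AE: "pmp_partial M R f \<Longrightarrow> AE x in M. pg_rep (pg_class M R f) x = f x"
  using rep_in_class unfolding pg_class_def by blast

lemma class_cong:
  assumes "AE x in M. f x = g x"
  shows "pg_class M R f = pg_class M R g"
proof -
  have "\<And>h. (AE x in M. h x = f x) = (AE x in M. h x = g x)"
  proof
    fix h assume "AE x in M. h x = f x"
    with assms show "AE x in M. h x = g x" by eventually_elim simp
  next
    fix h assume "AE x in M. h x = g x"
    with assms show "AE x in M. h x = f x" by eventually_elim simp
  qed
  then show ?thesis unfolding pg_class_def by simp
qed

lemma AE_comp_inner:
  assumes "AE x in M. g x = g' x"
  shows "AE x in M. (h \<circ>\<^sub>m g) x = (h \<circ>\<^sub>m g') x"
  using assms by eventually_elim (simp add: map_comp_def)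

lemma AE_comp_outer:
  assumes g: "pmp_partial M R g" and sp: "space M = UNIV"
    and hh: "AE x in M. h x = h' x"
  shows "AE x in M. (h \<circ>\<^sub>m g) x = (h' \<circ>\<^sub>m g) x"
proof -
  from hh obtain N where N: "{x \<in> space M. \<not> h x = h' x} \<subseteq> N" "emeasure M N = 0" "N \<in> sets M"
    by (rule AE_E)
  have pb: "borel_pbij M R g" and mp: "meas_pres M g" using g unfolding pmp_partial_def by auto
  define A where "A = {x\<in>dom g. the (g x) \<in> N}"
  have A: "A \<in> sets M" using pb N(3) unfolding A_def borel_pbij_def by blast
  have Ad: "A \<subseteq> dom g" unfolding A_def by auto
  have imN: "(\<lambda>x. the (g x)) ` A \<subseteq> N" unfolding A_def by auto
  have ims: "(\<lambda>x. the (g x)) ` A \<in> sets M" using pb A Ad unfolding borel_pbij_def by blast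
  have "emeasure M A = emeasure M ((\<lambda>x. the (g x)) ` A)" using mp A Ad unfolding meas_pres_def by simp
  also have "\<dots> \<le> emeasure M N" using imN N(3) by (rule emeasure_mono)
  finally have "emeasure M A = 0" using N(2) by simp
  then have An: "A \<in> null_sets M" using A by (simp add: null_sets_def)
  show ?thesis
  proof (rule AE_I'[OF An])
    show "{x \<in> space M. \<not> (h \<circ>\<^sub>m g) x = (h' \<circ>\<^sub>m g) x} \<subseteq> A"
    proof
      fix x assume x: "x \<in> {x \<in> space M. \<not> (h \<circ>\<^sub>m g) x = (h' \<circ>\<^sub>m g) x}"
      then obtain y where y: "g x = Some y" by (cases "g x") (auto simp: map_comp_def)
      then have "h y \<noteq> h' y" using x by (simp add: map_comp_def)
      then have "y \<in> N" using N(1) sp by auto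
      then show "x \<in> A" using y unfolding A_def by auto
    qed
  qed
qed

lemma mult_class:
  assumes sp: "space M = UNIV" and f: "pmp_partial M R f" and g: "pmp_partial M R g"
  shows "pg_mult M R (pg_class M R f) (pg_class M R g) = pg_class M R (f \<circ>\<^sub>m g)"
proof -
  let ?rf = "pg_rep (pg_class M R f)" and ?rg = "pg_rep (pg_class M R g)"
  have 1: "AE x in M. (?rf \<circ>\<^sub>m ?rg) x = (f \<circ>\<^sub>m ?rg) x"
    by (rule AE_comp_outer[OF rep_pmp[OF g] sp rep_AE[OF f]])
  have 2: "AE x in M. (f \<circ>\<^sub>m ?rg) x = (f \<circ>\<^sub>m g) x"
    by (rule AE_comp_inner[OF rep_AE[OF g]])
  have "AE x in M. (?rf \<circ>\<^sub>m ?rg) x = (f \<circ>\<^sub>m g) x" using 1 2 by eventually_elim simp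
  then show ?thesis unfolding pg_mult_def by (rule class_cong)
qed

lemma class_rep_class:
  "pmp_partial M R f \<Longrightarrow> pg_class M R (pg_rep (pg_class M R f)) = pg_class M R f"
  by (rule class_cong[OF rep_AE])

lemma pseudo_elem:
  assumes "S \<in> pseudogroup M R"
  shows "pmp_partial M R (pg_rep S)" "S = pg_class M R (pg_rep S)"
proof -
  obtain f where f: "pmp_partial M R f" "S = pg_class M R f"
    using assms unfolding pseudogroup_def by blast
  then show "pmp_partial M R (pg_rep S)" using rep_pmp by blast
  show "S = pg_class M R (pg_rep S)" using f class_rep_class by metis
qed

lemma pseudo_class: "pmp_partial M R f \<Longrightarrow> pg_class M R f \<in> pseudogroup M R"
  unfolding pseudogroup_def by blast

lemma pg_sum_single: "pg_sum M R {t} = pg_class M R (pg_rep t)"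
proof -
  have "(\<lambda>x. if \<exists>S\<in>{t}. x \<in> dom (pg_rep S)
      then pg_rep (SOME S. S \<in> {t} \<and> x \<in> dom (pg_rep S)) x else None) = pg_rep t"
  proof
    fix x show "(if \<exists>S\<in>{t}. x \<in> dom (pg_rep S)
      then pg_rep (SOME S. S \<in> {t} \<and> x \<in> dom (pg_rep S)) x else None) = pg_rep t x"
    proof (cases "x \<in> dom (pg_rep t)")
      case True
      then have "(SOME S. S \<in> {t} \<and> x \<in> dom (pg_rep S)) = t" by (intro some_equality) auto
      then show ?thesis using True by simp
    next
      case False then show ?thesis by (auto simp: domIff)
    qed
  qed
  then show ?thesis unfolding pg_sum_def by simp
qed

lemma single_SigmaSums: "t \<in> A \<Longrightarrow> pg_sum M R {t} \<in> SigmaSums M R A"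
  unfolding SigmaSums_def by blast




lemma comb_dom:
  assumes p: "pperm d p" and q: "pperm d q" and dp: "pp_dist d p (p \<circ>\<^sub>m q) < \<delta>"
    and dq: "pp_dist d q (q \<circ>\<^sub>m q) < \<delta>" and tq: "pp_tr d q < c + \<delta>" and dpos: "d > 0"
  shows "real (card (dom p)) \<le> (c + 3 * \<delta>) * real d"
proof -
  let ?I = "{1..d}"
  define A where "A = {i\<in>?I. p i \<noteq> (p \<circ>\<^sub>m q) i}"
  define B where "B = {i\<in>?I. q i \<noteq> (q \<circ>\<^sub>m q) i}"
  define C where "C = {i\<in>?I. q i = Some i}"
  have injq: "inj_on q (dom q)" using q unfolding pperm_def by blast
  have sub: "dom p \<subseteq> A \<union> B \<union> C"
  proof
    fix i assume i: "i \<in> dom p"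
    then have iI: "i \<in> ?I" using p unfolding pperm_def by blast
    show "i \<in> A \<union> B \<union> C"
    proof (cases "i \<in> A \<or> i \<in> B")
      case True then show ?thesis by blast
    next
      case False
      then have nA: "i \<notin> A" and nB: "i \<notin> B" by blast+
      have e1: "p i = (p \<circ>\<^sub>m q) i" using nA iI unfolding A_def by blast
      have e2: "q i = (q \<circ>\<^sub>m q) i" using nB iI unfolding B_def by blast
      have "q i \<noteq> None"
      proof
        assume "q i = None"
        then have "(p \<circ>\<^sub>m q) i = None" by (simp add: map_comp_def)
        then show False using i e1 by (simp add: domIff)
      qed
      then obtain j where j: "q i = Some j" by blast
      have "(q \<circ>\<^sub>m q) i = q j" using j by (simp add: map_comp_def)
      then have "q j = Some j" using e2 j by argo
      then have "q i = q j" using j by simp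
      then have "i = j" using injq j \<open>q j = Some j\<close> by (meson domI inj_onD)
      then show ?thesis using j iI unfolding C_def by simp
    qed
  qed
  have fin: "finite A" "finite B" "finite C" unfolding A_def B_def C_def by auto
  have dr: "real d > 0" using dpos by simp
  have cA: "real (card A) < \<delta> * real d" using dp dr unfolding pp_dist_def A_def by (simp add: field_simps)
  have cB: "real (card B) < \<delta> * real d" using dq dr unfolding pp_dist_def B_def by (simp add: field_simps)
  have cC: "real (card C) < (c + \<delta>) * real d" using tq dr unfolding pp_tr_def C_def by (simp add: field_simps)
  have "card (dom p) \<le> card (A \<union> B \<union> C)" using sub fin by (intro card_mono) auto
  also have "\<dots> \<le> card (A \<union> B) + card C" by (rule card_Un_le)
  also have "\<dots> \<le> card A + card B + card C" using card_Un_le[of A B] by simp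
  finally have "real (card (dom p)) \<le> real (card A) + real (card B) + real (card C)" by linarith
  then show ?thesis using cA cB cC by (simp add: algebra_simps)
qed

lemma count_pperm:
  assumes d1: "d \<ge> 1"
  shows "finite {\<sigma>. pperm d \<sigma> \<and> real (card (dom \<sigma>)) \<le> K}
    \<and> real (card {\<sigma>. pperm d \<sigma> \<and> real (card (dom \<sigma>)) \<le> K}) \<le> 2 ^ d * real d powr K"
proof -
  let ?I = "{1..d}"
  define P where "P = {\<sigma>. pperm d \<sigma> \<and> real (card (dom \<sigma>)) \<le> K}"
  define Ds where "Ds = {D\<in>Pow ?I. real (card D) \<le> K}"
  define T where "T = (SIGMA D:Ds. PiE D (\<lambda>_. ?I))"
  define \<Phi> where "\<Phi> = (\<lambda>\<sigma>::nat \<rightharpoonup> nat. (dom \<sigma>, restrict (\<lambda>i. the (\<sigma> i)) (dom \<sigma>)))"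
  have inj: "inj_on \<Phi> P"
  proof (rule inj_onI)
    fix \<sigma> \<tau> assume "\<Phi> \<sigma> = \<Phi> \<tau>"
    then have 1: "dom \<sigma> = dom \<tau>" and 2: "restrict (\<lambda>i. the (\<sigma> i)) (dom \<sigma>) = restrict (\<lambda>i. the (\<tau> i)) (dom \<tau>)"
      unfolding \<Phi>_def by auto
    show "\<sigma> = \<tau>"
    proof
      fix i show "\<sigma> i = \<tau> i"
      proof (cases "i \<in> dom \<sigma>")
        case True
        then have "the (\<sigma> i) = the (\<tau> i)" using 1 2 by (metis restrict_apply')
        then show ?thesis using True 1 by (metis domIff option.expand)
      next
        case False then show ?thesis using 1 by (metis domIff)
      qed
    qed
  qed
  have finT: "finite T" unfolding T_def Ds_def by (intro finite_SigmaI finite_PiE) (auto intro: finite_subset)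
  have img: "\<Phi> ` P \<subseteq> T"
  proof
    fix x assume "x \<in> \<Phi> ` P"
    then obtain \<sigma> where s: "\<sigma> \<in> P" "x = \<Phi> \<sigma>" by blast
    have "dom \<sigma> \<subseteq> ?I" "ran \<sigma> \<subseteq> ?I" using s unfolding P_def pperm_def by auto
    moreover have "real (card (dom \<sigma>)) \<le> K" using s unfolding P_def by simp
    moreover have "\<And>i. i \<in> dom \<sigma> \<Longrightarrow> the (\<sigma> i) \<in> ?I"
    proof -
      fix i assume "i \<in> dom \<sigma>"
      then have "the (\<sigma> i) \<in> ran \<sigma>" by (auto simp: ran_def)
      then show "the (\<sigma> i) \<in> ?I" using \<open>ran \<sigma> \<subseteq> ?I\<close> by blast
    qed
    ultimately show "x \<in> T" unfolding s(2) T_def Ds_def \<Phi>_def by (auto simp: PiE_iff)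
  qed
  have finP: "finite P"
    using finite_imageD[OF finite_subset[OF img finT] inj] .
  have "card P \<le> card T" using card_inj_on_le[OF inj img finT] .
  also have "card T = (\<Sum>D\<in>Ds. card (PiE D (\<lambda>_. ?I)))"
    unfolding T_def by (rule card_SigmaI) (auto simp: Ds_def intro!: finite_PiE intro: finite_subset)
  also have "\<dots> = (\<Sum>D\<in>Ds. d ^ card D)"
  proof (rule sum.cong)
    fix D assume "D \<in> Ds"
    then have "finite D" unfolding Ds_def by (auto intro: finite_subset)
    then show "card (PiE D (\<lambda>_. ?I)) = d ^ card D" by (simp add: card_PiE)
  qed simp
  finally have c0: "card P \<le> (\<Sum>D\<in>Ds. d ^ card D)" .
  then have "real (card P) \<le> real (\<Sum>D\<in>Ds. d ^ card D)" by (rule of_nat_mono)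
  also have "\<dots> = (\<Sum>D\<in>Ds. real d ^ card D)" by (simp add: of_nat_sum)
  also have "\<dots> \<le> (\<Sum>D\<in>Ds. real d powr K)"
  proof (rule sum_mono)
    fix D assume D: "D \<in> Ds"
    have "real d ^ card D = real d powr (real (card D))" using d1 by (simp add: powr_realpow)
    also have "\<dots> \<le> real d powr K" using D d1 unfolding Ds_def by (intro powr_mono) auto
    finally show "real d ^ card D \<le> real d powr K" .
  qed
  also have "\<dots> \<le> (\<Sum>D\<in>Pow ?I. real d powr K)"
    by (rule sum_mono2) (auto simp: Ds_def)
  also have "\<dots> = 2 ^ d * real d powr K" by (simp add: card_Pow)
  finally show ?thesis using finP unfolding P_def by simp
qed




lemma key_bound:
  assumes P: "prob_space M" and sp: "space M = UNIV" and eqv: "equiv UNIV R" and pr: "pmp_rel M R"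
    and FS: "F \<subseteq> pseudogroup M R" and S: "S \<in> F"
    and phi: "\<phi> \<in> SA M R F 2 \<delta> d" and dpos: "d > 0"
  shows "pperm d (\<phi> S) \<and> real (card (dom (\<phi> S))) \<le> (measure M (dom (pg_rep S)) + 3 * \<delta>) * real d"
proof -
  have rf: "refl R" and sy: "sym R" and tr: "trans R" using eqv unfolding equiv_def by auto
  define f where "f = pg_rep S"
  have SP: "S \<in> pseudogroup M R" using FS S by blast
  have f: "pmp_partial M R f" and Sf: "S = pg_class M R f" using pseudo_elem[OF SP] unfolding f_def by auto
  have fb: "borel_pbij M R f" using f unfolding pmp_partial_def by blast
  have injf: "inj_on f (dom f)" using fb unfolding borel_pbij_def by blast
  have one: "pmp_partial M R Some" by (rule pbij_pmp[OF pr Some_pbij[OF sp rf]])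
  have pf: "pmp_partial M R (pinv f)" by (rule pbij_pmp[OF pr pinv_pbij[OF fb sy]])
  define E where "E = pinv f \<circ>\<^sub>m f"
  have Eb: "pmp_partial M R E" unfolding E_def
    using pbij_pmp[OF pr comp_pbij[OF pinv_pbij[OF fb sy] fb tr]] .
  have Eeq: "E = (\<lambda>x. if x \<in> dom f then Some x else None)"
  proof
    fix x show "E x = (if x \<in> dom f then Some x else None)"
    proof (cases "f x")
      case None then show ?thesis by (simp add: E_def map_comp_def domIff)
    next
      case (Some y)
      then have "pinv f y = Some x" using pinv_Some[OF injf] by simp
      then show ?thesis using Some by (simp add: E_def map_comp_def domIff)
    qed
  qed
  have fSome: "f \<circ>\<^sub>m Some = f" by (rule ext) (simp add: map_comp_def)
  have SomeSome: "Some \<circ>\<^sub>m Some = Some" by (rule ext) (simp add: map_comp_def)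
  have EE: "E \<circ>\<^sub>m E = E" unfolding Eeq by (rule ext) (simp add: map_comp_def)
  have fE: "f \<circ>\<^sub>m E = f" unfolding Eeq by (rule ext) (auto simp: map_comp_def domIff)
  define one where "one = pg_one M R"
  have one_def': "one = pg_class M R Some" unfolding one_def pg_one_def ..
  define e where "e = pg_class M R E"
  have s1: "pg_mult M R S one = S" unfolding one_def' Sf mult_class[OF sp f one] fSome ..
  have o1: "pg_mult M R one one = one" unfolding one_def' mult_class[OF sp one one] SomeSome ..
  have inv: "pg_inv M R S = pg_class M R (pinv f)" unfolding pg_inv_def f_def ..
  have ie: "pg_mult M R (pg_inv M R S) S = e"
    unfolding inv e_def E_def by (subst Sf) (rule mult_class[OF sp pf f])
  have ee: "pg_mult M R e e = e" unfolding e_def mult_class[OF sp Eb Eb] EE ..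
  have se0: "pg_mult M R (pg_class M R f) (pg_class M R E) = pg_class M R f"
    by (simp only: mult_class[OF sp f Eb] fE)
  have se: "pg_mult M R S e = S" unfolding e_def using se0 Sf by simp
  have Fpm1: "S \<in> Fpm M R F" "one \<in> Fpm M R F" "pg_inv M R S \<in> Fpm M R F"
    using S unfolding Fpm_def one_def by auto
  have SF2: "S \<in> Fpow M R F 2"
  proof -
    have "foldr (pg_mult M R) [S, one] (pg_one M R) = S" using s1 o1 by (simp add: one_def[symmetric])
    then show ?thesis unfolding Fpow_def using Fpm1 by (intro CollectI exI[of _ "[S, one]"]) auto
  qed
  have eF2: "e \<in> Fpow M R F 2"
  proof -
    have "foldr (pg_mult M R) [pg_inv M R S, S] (pg_one M R) = e" using s1 ie by (simp add: one_def[symmetric])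
    then show ?thesis unfolding Fpow_def using Fpm1 by (intro CollectI exI[of _ "[pg_inv M R S, S]"]) auto
  qed
  define Sg where "Sg = SigmaSums M R (Fpow M R F 2)"
  have SSg: "S \<in> Sg"
  proof -
    have "pg_sum M R {S} = S" unfolding pg_sum_single by (metis Sf class_rep_class f)
    then show ?thesis using single_SigmaSums[OF SF2, of M R] unfolding Sg_def by simp
  qed
  have eSg: "e \<in> Sg"
  proof -
    have "pg_sum M R {e} = e" unfolding pg_sum_single e_def by (rule class_rep_class[OF Eb])
    then show ?thesis using single_SigmaSums[OF eF2, of M R] unfolding Sg_def by simp
  qed
  have eP: "e \<in> pseudogroup M R" unfolding e_def by (rule pseudo_class[OF Eb])
  have phis: "(\<forall>T\<in>pseudogroup M R. pperm d (\<phi> T))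
       \<and> (\<forall>s\<in>Sg. \<forall>t\<in>Sg. pg_mult M R s t \<in> Sg \<longrightarrow>
            pp_dist d (\<phi> (pg_mult M R s t)) (\<phi> s \<circ>\<^sub>m \<phi> t) < \<delta>)
       \<and> (\<forall>s\<in>Sg. \<bar>pp_tr d (\<phi> s) - pg_tau M s\<bar> < \<delta>)"
    using phi unfolding SA_def Let_def Sg_def by blast
  have pS: "pperm d (\<phi> S)" and pe: "pperm d (\<phi> e)" using phis SP eP by auto
  have d1: "pp_dist d (\<phi> S) (\<phi> S \<circ>\<^sub>m \<phi> e) < \<delta>"
    using phis SSg eSg se by metis
  have d2: "pp_dist d (\<phi> e) (\<phi> e \<circ>\<^sub>m \<phi> e) < \<delta>"
    using phis eSg ee by metis
  have t1: "pp_tr d (\<phi> e) < pg_tau M e + \<delta>" using phis eSg by fastforce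
  have tau: "pg_tau M e \<le> measure M (dom f)"
  proof -
    have ae: "AE x in M. pg_rep e x = E x" unfolding e_def by (rule rep_AE[OF Eb])
    have "AE x in M. x \<in> {x. pg_rep e x = Some x} \<longrightarrow> x \<in> dom f"
      using ae by eventually_elim (auto simp: Eeq split: if_splits)
    moreover have "dom f \<in> sets M" using fb unfolding borel_pbij_def by blast
    ultimately have le: "emeasure M {x. pg_rep e x = Some x} \<le> emeasure M (dom f)" by (rule emeasure_mono_AE)
    have fin: "emeasure M (dom f) < top" using P by (simp add: prob_space.emeasure_le_1 order_le_less_trans[OF _ ennreal_one_less_top] prob_space_def finite_measure.emeasure_finite top.not_eq_extremum)
    show ?thesis unfolding pg_tau_def measure_def using enn2real_mono[OF le fin] .
  qed
  have "real (card (dom (\<phi> S))) \<le> (measure M (dom f) + 3 * \<delta>) * real d"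
    by (rule comb_dom[OF pS pe d1 d2 _ dpos]) (use t1 tau in linarith)
  then show ?thesis using pS unfolding f_def by simp
qed




lemma ratio_bound:
  assumes P: "prob_space M" and sp: "space M = UNIV" and eqv: "equiv UNIV R" and pr: "pmp_rel M R"
    and fF: "finite F" and FS: "F \<subseteq> pseudogroup M R" and d2: "d \<ge> 2" and dl: "\<delta> > 0"
  shows "(if NSA M R F 2 \<delta> d = 0 then -\<infinity>
      else ereal (ln (real (NSA M R F 2 \<delta> d)) / (real d * ln (real d))))
    \<le> ereal (real (card F) * ln 2 / ln (real d) + pg_cost M F + 3 * \<delta> * real (card F))"
proof (cases "NSA M R F 2 \<delta> d = 0")
  case True then show ?thesis by simp
next
  case False
  define K where "K = (\<lambda>S. (measure M (dom (pg_rep S)) + 3 * \<delta>) * real d)"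
  define Pset where "Pset = (\<lambda>S. {\<sigma>. pperm d \<sigma> \<and> real (card (dom \<sigma>)) \<le> K S})"
  have d1: "d \<ge> 1" "d > 0" using d2 by auto
  have cnt: "\<And>S. finite (Pset S) \<and> real (card (Pset S)) \<le> 2 ^ d * real d powr K S"
    unfolding Pset_def by (rule count_pperm[OF d1(1)])
  have img: "(\<lambda>\<phi>. restrict \<phi> F) ` SA M R F 2 \<delta> d \<subseteq> PiE F Pset"
  proof
    fix x assume "x \<in> (\<lambda>\<phi>. restrict \<phi> F) ` SA M R F 2 \<delta> d"
    then obtain \<phi> where phi: "\<phi> \<in> SA M R F 2 \<delta> d" "x = restrict \<phi> F" by blast
    have "\<And>S. S \<in> F \<Longrightarrow> \<phi> S \<in> Pset S"
      using key_bound[OF P sp eqv pr FS _ phi(1) d1(2)] unfolding Pset_def K_def by blast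
    then show "x \<in> PiE F Pset" unfolding phi(2) by auto
  qed
  have finPi: "finite (PiE F Pset)" using fF cnt by (intro finite_PiE) auto
  have "NSA M R F 2 \<delta> d \<le> card (PiE F Pset)" unfolding NSA_def by (rule card_mono[OF finPi img])
  also have "\<dots> = (\<Prod>S\<in>F. card (Pset S))" by (rule card_PiE[OF fF])
  finally have "real (NSA M R F 2 \<delta> d) \<le> real (\<Prod>S\<in>F. card (Pset S))" by (rule of_nat_mono)
  also have "\<dots> = (\<Prod>S\<in>F. real (card (Pset S)))" by simp
  also have "\<dots> \<le> (\<Prod>S\<in>F. 2 ^ d * real d powr K S)"
    by (rule prod_mono) (use cnt in auto)
  also have "\<dots> = (\<Prod>S\<in>F. exp (real d * ln 2 + K S * ln (real d)))"
  proof (rule prod.cong)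
    fix S show "2 ^ d * real d powr K S = exp (real d * ln 2 + K S * ln (real d))"
    proof -
      have e2: "(2::real) ^ d = exp (real d * ln 2)" by (simp add: exp_of_nat_mult)
      have "real d powr K S = exp (K S * ln (real d))" using d1 by (simp add: powr_def mult.commute)
      then show ?thesis using e2 by (simp add: exp_add)
    qed
  qed simp
  also have "\<dots> = exp (\<Sum>S\<in>F. real d * ln 2 + K S * ln (real d))" by (simp add: exp_sum fF)
  finally have le: "real (NSA M R F 2 \<delta> d) \<le> exp (\<Sum>S\<in>F. real d * ln 2 + K S * ln (real d))" .
  have pos: "real (NSA M R F 2 \<delta> d) > 0" using False by simp
  have "ln (real (NSA M R F 2 \<delta> d)) \<le> (\<Sum>S\<in>F. real d * ln 2 + K S * ln (real d))"
    using le pos by (metis ln_exp ln_le_cancel_iff exp_gt_zero)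
  also have "\<dots> = real (card F) * real d * ln 2 + (\<Sum>S\<in>F. K S) * ln (real d)"
    by (simp add: sum.distrib sum_distrib_right)
  also have "(\<Sum>S\<in>F. K S) = (pg_cost M F + 3 * \<delta> * real (card F)) * real d"
    unfolding K_def pg_cost_def by (simp add: sum.distrib sum_distrib_right sum_distrib_left algebra_simps)
  finally have lnb: "ln (real (NSA M R F 2 \<delta> d)) \<le> real (card F) * real d * ln 2 + (pg_cost M F + 3 * \<delta> * real (card F)) * real d * ln (real d)" .
  have lnd: "ln (real d) > 0" using d2 by simp
  have dd: "real d * ln (real d) > 0" using lnd d1 by simp
  have "ln (real (NSA M R F 2 \<delta> d)) / (real d * ln (real d))
     \<le> (real (card F) * real d * ln 2 + (pg_cost M F + 3 * \<delta> * real (card F)) * real d * ln (real d)) / (real d * ln (real d))"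
    using lnb dd by (rule divide_right_mono[OF _ less_imp_le])
  also have "\<dots> = real (card F) * ln 2 / ln (real d) + pg_cost M F + 3 * \<delta> * real (card F)"
    using lnd d1 by (simp add: field_simps)
  finally show ?thesis using False by simp
qed

lemma lim_aux: "((\<lambda>d::nat. a / ln (real d) + C) \<longlongrightarrow> C) sequentially"
proof -
  have "filterlim (\<lambda>d::nat. ln (real d)) at_top sequentially"
    by (rule filterlim_compose[OF ln_at_top filterlim_real_sequentially])
  then have "((\<lambda>d::nat. a / ln (real d)) \<longlongrightarrow> 0) sequentially"
    by (intro tendsto_divide_0[OF tendsto_const] filterlim_at_top_imp_at_infinity)
  then show ?thesis using tendsto_add_const_iff[of C "\<lambda>d::nat. a / ln (real d)" 0] by (simp add: add.commute)
qed




theorem mainTheorem11: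
  fixes M :: "'a::polish_space measure" and R :: "('a \<times> 'a) set"
    and F :: "('a \<rightharpoonup> 'a) set set"
  assumes "prob_space M" and "sets M = sets borel"
    and "cber M R" and "pmp_rel M R"
    and "finite F" and "F \<subseteq> pseudogroup M R"
  shows "sofic_s M R F \<le> ereal (pg_cost M F)"
proof -
  have sp: "space M = UNIV" using sets_eq_imp_space_eq[OF assms(2)] by simp
  have eqv: "equiv UNIV R" using assms(3) sp unfolding cber_def by simp
  define c where "c = pg_cost M F"
  define k where "k = real (card F)"
  define L where "L = (\<lambda>\<delta>. limsup (\<lambda>d. if NSA M R F 2 \<delta> d = 0 then -\<infinity>
      else ereal (ln (real (NSA M R F 2 \<delta> d)) / (real d * ln (real d)))))"
  have Lb: "L \<delta> \<le> ereal (c + 3 * \<delta> * k)" if dl: "\<delta> > 0" for \<delta>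
  proof -
    have ev: "eventually (\<lambda>d. (if NSA M R F 2 \<delta> d = 0 then -\<infinity>
      else ereal (ln (real (NSA M R F 2 \<delta> d)) / (real d * ln (real d))))
        \<le> ereal ((k * ln 2) / ln (real d) + (c + 3 * \<delta> * k))) sequentially"
    proof (rule eventually_sequentiallyI[of 2])
      fix d :: nat assume "d \<ge> 2"
      from ratio_bound[OF assms(1) sp eqv assms(4) assms(5) assms(6) this dl]
      show "(if NSA M R F 2 \<delta> d = 0 then -\<infinity>
      else ereal (ln (real (NSA M R F 2 \<delta> d)) / (real d * ln (real d))))
        \<le> ereal ((k * ln 2) / ln (real d) + (c + 3 * \<delta> * k))"
        unfolding c_def k_def by (simp add: add.assoc)
    qed
    have "L \<delta> \<le> limsup (\<lambda>d. ereal ((k * ln 2) / ln (real d) + (c + 3 * \<delta> * k)))"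
      unfolding L_def by (rule Limsup_mono[OF ev])
    also have "\<dots> = ereal (c + 3 * \<delta> * k)"
      by (rule lim_imp_Limsup[OF trivial_limit_sequentially]) (rule tendsto_ereal[OF lim_aux])
    finally show ?thesis .
  qed
  have "sofic_s M R F \<le> (INF \<delta>\<in>{0<..}. L \<delta>)"
    unfolding sofic_s_def L_def by (rule INF_lower) simp
  also have "(INF \<delta>\<in>{0<..}. L \<delta>) \<le> ereal c"
  proof (rule ereal_le_epsilon2)
    fix e :: real assume e: "0 < e"
    define \<delta> where "\<delta> = e / (3 * k + 1)"
    have k0: "k \<ge> 0" unfolding k_def by simp
    have dpos: "\<delta> > 0" unfolding \<delta>_def using e k0 by simp
    have "3 * \<delta> * k \<le> e"
    proof -
      have "3 * \<delta> * k = e * (3 * k) / (3 * k + 1)" unfolding \<delta>_def by simp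
      also have "\<dots> \<le> e" using e k0 by (simp add: field_simps)
      finally show ?thesis .
    qed
    have "(INF \<delta>\<in>{0<..}. L \<delta>) \<le> L \<delta>" using dpos by (intro INF_lower) simp
    also have "\<dots> \<le> ereal (c + 3 * \<delta> * k)" by (rule Lb[OF dpos])
    also have "\<dots> \<le> ereal c + ereal e" using \<open>3 * \<delta> * k \<le> e\<close> by simp
    finally show "(INF \<delta>\<in>{0<..}. L \<delta>) \<le> ereal c + ereal e" .
  qed
  finally show ?thesis unfolding c_def .
qed


end
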